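(* Let $k$ be a field, $R=k[x_1,\dots,x_n]$, and $I=(x_1^{a_1},\dots,x_n^{a_n},x_1^{b_1}\cdots x_n^{b_n})$ with $0\le b_i<a_i$ for all $i$ and $b_i\neq0$, $b_j\ne 0$ for at least two distinct indices $i,j$. For each $i$ with $b_i\neq 0$ set $d_i=\gcd(a_i,b_i)$, $a_i'=a_i/d_i$, $b_i'=b_i/d_i$, $c_i=d_i$; for $i$ with $b_i=0$ set $a_i'=a_i$, $b_i'=0$, $c_i=1$. Let $I'=(x_1^{a_1'},\dots,x_n^{a_n'},x_1^{b_1'}\cdots x_n^{b_n'})$, and let $\delta$ be the $k$-algebra endomorphism of $R[T_1,\dots,T_{n+1}]$ with $\delta(T_j)=T_j$ for all $j$ and $\delta(x_i)=x_i^{c_i}$. Let $\mathcal J$ (resp. $\mathcal J'$) be the defining ideal of the Rees algebra of $I$ (resp. $I'$), i.e. the kernel of $R[T_1,\dots,T_{n+1}]\to R[IT]$ sending $T_i\mapsto x_i^{a_i}T$ ($i\le n$), $T_{n+1}\mapsto x^{b}T$ (resp. with the primed exponents). Then: (1) $\mathcal J$ is generated by $\delta(\mathcal J')$; moreover $\mathcal J$ and $\mathcal J'$ have the same number of minimal binomial generators, with the same degrees in $T_1,\dots,T_{n+1}$. (2) If $J'=(x_1^{a_1'},\dots,x_n^{a_n'})$ is a reduction of $I'$, then $J=(x_1^{a_1},\dots,x_n^{a_n})$ is a reduction of $I$ and $\operatorname{red}_J(I)=\operatorname{red}_{J'}(I')$.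
   Context: For ideals $J\subset I$, $J$ is a reduction of $I$ if $JI^{r}=I^{r+1}$ for some $r\ge0$; the least such $r$ is the reduction number $\operatorname{red}_J(I)$. *)

theory Defs
  imports Main "HOL-Library.Poly_Mapping"
begin

definition is_ideal :: "'a::comm_ring_1 set \<Rightarrow> bool" where
  "is_ideal I \<longleftrightarrow> 0 \<in> I \<and> (\<forall>x\<in>I. \<forall>y\<in>I. x + y \<in> I) \<and> (\<forall>r. \<forall>x\<in>I. r * x \<in> I)"

definition ideal_gen :: "'a::comm_ring_1 set \<Rightarrow> 'a set" where
  "ideal_gen S = \<Inter>{I. is_ideal I \<and> S \<subseteq> I}"

definition ideal_mult :: "'a::comm_ring_1 set \<Rightarrow> 'a set \<Rightarrow> 'a set" where
  "ideal_mult I J = ideal_gen {x * y | x y. x \<in> I \<and> y \<in> J}"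

primrec ideal_pow :: "'a::comm_ring_1 set \<Rightarrow> nat \<Rightarrow> 'a set" where
  "ideal_pow I 0 = UNIV"
| "ideal_pow I (Suc r) = ideal_mult (ideal_pow I r) I"

definition is_reduction :: "'a::comm_ring_1 set \<Rightarrow> 'a set \<Rightarrow> bool" where
  "is_reduction J I \<longleftrightarrow> J \<subseteq> I \<and> (\<exists>r. ideal_mult J (ideal_pow I r) = ideal_pow I (Suc r))"

definition red_num :: "'a::comm_ring_1 set \<Rightarrow> 'a set \<Rightarrow> nat" where
  "red_num J I = (LEAST r. ideal_mult J (ideal_pow I r) = ideal_pow I (Suc r))"

definition minimal_gens :: "'a::comm_ring_1 set \<Rightarrow> 'a set \<Rightarrow> bool" where
  "minimal_gens G I \<longleftrightarrow> ideal_gen G = I \<and> (\<forall>H. H \<subset> G \<longrightarrow> ideal_gen H \<noteq> I)"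

type_synonym ('v,'k) mpoly = "('v \<Rightarrow>\<^sub>0 nat) \<Rightarrow>\<^sub>0 'k"

definition binomial :: "('v,'k::zero) mpoly \<Rightarrow> bool" where
  "binomial p \<longleftrightarrow> card (Poly_Mapping.keys p) \<le> 2"

text \<open>k-linear map induced by a map on monomials (a k-algebra hom when f is a monoid hom).\<close>
definition mono_map :: "(('v \<Rightarrow>\<^sub>0 nat) \<Rightarrow> ('w \<Rightarrow>\<^sub>0 nat)) \<Rightarrow> ('v,'k::comm_ring_1) mpoly \<Rightarrow> ('w,'k) mpoly" where
  "mono_map f p = (\<Sum>m\<in>Poly_Mapping.keys p. Poly_Mapping.single (f m) (Poly_Mapping.lookup p m))"

definition xmon :: "('n::finite \<Rightarrow> nat) \<Rightarrow> ('n,'k::comm_ring_1) mpoly" where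
  "xmon v = Poly_Mapping.single (Abs_poly_mapping v) 1"

definition mon_ideal :: "('n::finite \<Rightarrow> nat) \<Rightarrow> ('n \<Rightarrow> nat) \<Rightarrow> ('n,'k::comm_ring_1) mpoly set" where
  "mon_ideal a b = ideal_gen ((\<lambda>i. xmon (\<lambda>j. if j = i then a i else 0)) ` UNIV \<union> {xmon b})"

definition pure_ideal :: "('n::finite \<Rightarrow> nat) \<Rightarrow> ('n,'k::comm_ring_1) mpoly set" where
  "pure_ideal a = ideal_gen ((\<lambda>i. xmon (\<lambda>j. if j = i then a i else 0)) ` UNIV)"

text \<open>Exponent vector of the j-th generator: Some i gives x_i^{a_i}, None gives x^b (= T_{n+1}).\<close>
definition gen_exp :: "('n \<Rightarrow> nat) \<Rightarrow> ('n \<Rightarrow> nat) \<Rightarrow> 'n option \<Rightarrow> 'n \<Rightarrow> nat" where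
  "gen_exp a b j = (case j of Some i \<Rightarrow> (\<lambda>l. if l = i then a i else 0) | None \<Rightarrow> b)"

text \<open>R[T]: variables Inl i = x_i, Inr (Some i) = T_i, Inr None = T_{n+1}.
  R[t]: variables Some i = x_i, None = t.
  Rees map on monomials: x^u T^beta \<mapsto> x^(u + \<Sum> beta_j e_j) t^(|beta|).\<close>
definition rees_mono :: "('n::finite \<Rightarrow> nat) \<Rightarrow> ('n \<Rightarrow> nat) \<Rightarrow> ('n + 'n option \<Rightarrow>\<^sub>0 nat) \<Rightarrow> ('n option \<Rightarrow>\<^sub>0 nat)" where
  "rees_mono a b m = Abs_poly_mapping (\<lambda>v. case v of
       Some i \<Rightarrow> Poly_Mapping.lookup m (Inl i) + (\<Sum>j\<in>UNIV. Poly_Mapping.lookup m (Inr j) * gen_exp a b j i)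
     | None \<Rightarrow> (\<Sum>j\<in>UNIV. Poly_Mapping.lookup m (Inr j)))"

definition rees_ideal :: "('n::finite \<Rightarrow> nat) \<Rightarrow> ('n \<Rightarrow> nat) \<Rightarrow> ('n + 'n option, 'k::comm_ring_1) mpoly set" where
  "rees_ideal a b = {p. mono_map (rees_mono a b) p = (0 :: ('n option,'k) mpoly)}"

definition delta_mono :: "('n \<Rightarrow> nat) \<Rightarrow> ('n + 'n option \<Rightarrow>\<^sub>0 nat) \<Rightarrow> ('n + 'n option \<Rightarrow>\<^sub>0 nat)" where
  "delta_mono c m = Abs_poly_mapping (\<lambda>v. case v of Inl i \<Rightarrow> c i * Poly_Mapping.lookup m (Inl i) | Inr j \<Rightarrow> Poly_Mapping.lookup m (Inr j))"

definition delta :: "('n::finite \<Rightarrow> nat) \<Rightarrow> ('n + 'n option, 'k::comm_ring_1) mpoly \<Rightarrow> ('n + 'n option, 'k) mpoly" where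
  "delta c = mono_map (delta_mono c)"

definition tdeg :: "('n::finite + 'n option \<Rightarrow>\<^sub>0 nat) \<Rightarrow> nat" where
  "tdeg m = (\<Sum>j\<in>UNIV. Poly_Mapping.lookup m (Inr j))"

definition tdegs :: "('n::finite + 'n option, 'k::zero) mpoly \<Rightarrow> nat set" where
  "tdegs p = tdeg ` Poly_Mapping.keys p"

end

theory Submission
  imports Defs
begin


lemma is_ideal_gen: "is_ideal (ideal_gen S)"
  unfolding ideal_gen_def is_ideal_def by auto

lemma ideal_gen_sub: "S \<subseteq> ideal_gen S"
  unfolding ideal_gen_def by auto

lemma ideal_gen_least: "is_ideal I \<Longrightarrow> S \<subseteq> I \<Longrightarrow> ideal_gen S \<subseteq> I"
  unfolding ideal_gen_def by auto

lemma ideal_gen_mono: "S \<subseteq> T \<Longrightarrow> ideal_gen S \<subseteq> ideal_gen T"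
  by (meson ideal_gen_least ideal_gen_sub is_ideal_gen order_trans)

lemma ideal_gen_idem: "is_ideal I \<Longrightarrow> ideal_gen I = I"
  by (simp add: ideal_gen_least ideal_gen_sub subset_antisym)

lemma is_idealD:
  assumes "is_ideal I"
  shows "0 \<in> I" "x \<in> I \<Longrightarrow> y \<in> I \<Longrightarrow> x + y \<in> I" "x \<in> I \<Longrightarrow> r * x \<in> I"
  using assms unfolding is_ideal_def by auto

lemma ideal_uminus: "is_ideal I \<Longrightarrow> x \<in> I \<Longrightarrow> - x \<in> I"
  by (metis is_idealD(3) minus_one_mult_self mult_minus1)

lemma ideal_diff: "is_ideal I \<Longrightarrow> x \<in> I \<Longrightarrow> y \<in> I \<Longrightarrow> x - y \<in> I"
  by (metis diff_conv_add_uminus ideal_uminus is_idealD(2))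

lemma ideal_sum: "is_ideal I \<Longrightarrow> (\<And>x. x \<in> A \<Longrightarrow> f x \<in> I) \<Longrightarrow> sum f A \<in> I"
  by (induction A rule: infinite_finite_induct) (auto intro: is_idealD)

lemma ideal_multr: "is_ideal I \<Longrightarrow> x \<in> I \<Longrightarrow> x * r \<in> I"
  by (metis is_idealD(3) mult.commute)

lemma ideal_UNIV: "is_ideal UNIV" unfolding is_ideal_def by auto

lemma ideal_one: "is_ideal I \<Longrightarrow> 1 \<in> I \<Longrightarrow> I = UNIV"
  by (metis UNIV_eq_I is_idealD(3) mult.right_neutral)

lemma ideal_gen_prod:
  "ideal_gen {u * v | u v. u \<in> ideal_gen S \<and> v \<in> ideal_gen T} = ideal_gen {s * t | s t. s \<in> S \<and> t \<in> T}"
proof (rule subset_antisym)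
  let ?K = "ideal_gen {s * t | s t. s \<in> S \<and> t \<in> T}"
  have K: "is_ideal ?K" by (rule is_ideal_gen)
  have 1: "u * t \<in> ?K" if u: "u \<in> ideal_gen S" and t: "t \<in> T" for u t
  proof -
    have "is_ideal {u. u * t \<in> ?K}"
      unfolding is_ideal_def
    proof (intro conjI ballI allI)
      show "0 \<in> {u. u * t \<in> ?K}" using is_idealD(1)[OF K] by simp
      show "x + y \<in> {u. u * t \<in> ?K}" if "x \<in> {u. u * t \<in> ?K}" "y \<in> {u. u * t \<in> ?K}" for x y
        using is_idealD(2)[OF K, of "x * t" "y * t"] that by (simp add: distrib_right)
      show "r * x \<in> {u. u * t \<in> ?K}" if "x \<in> {u. u * t \<in> ?K}" for r x
        using is_idealD(3)[OF K, of "x * t" r] that by (simp add: mult.assoc)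
    qed
    moreover have "S \<subseteq> {u. u * t \<in> ?K}"
    proof
      fix s assume "s \<in> S"
      then have "s * t \<in> {s * t | s t. s \<in> S \<and> t \<in> T}" using t by blast
      then show "s \<in> {u. u * t \<in> ?K}" using ideal_gen_sub[of "{s * t | s t. s \<in> S \<and> t \<in> T}"] by auto
    qed
    ultimately have "ideal_gen S \<subseteq> {u. u * t \<in> ?K}" by (rule ideal_gen_least)
    then show ?thesis using u by auto
  qed
  have 2: "u * v \<in> ?K" if u: "u \<in> ideal_gen S" and v: "v \<in> ideal_gen T" for u v
  proof -
    have "is_ideal {v. u * v \<in> ?K}"
      unfolding is_ideal_def
    proof (intro conjI ballI allI)
      show "0 \<in> {v. u * v \<in> ?K}" using is_idealD(1)[OF K] by simp
      show "x + y \<in> {v. u * v \<in> ?K}" if "x \<in> {v. u * v \<in> ?K}" "y \<in> {v. u * v \<in> ?K}" for x y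
        using is_idealD(2)[OF K, of "u * x" "u * y"] that by (simp add: distrib_left)
      show "r * x \<in> {v. u * v \<in> ?K}" if "x \<in> {v. u * v \<in> ?K}" for r x
        using is_idealD(3)[OF K, of "u * x" r] that by (simp add: mult.left_commute)
    qed
    moreover have "T \<subseteq> {v. u * v \<in> ?K}" using 1 u by auto
    ultimately have "ideal_gen T \<subseteq> {v. u * v \<in> ?K}" by (rule ideal_gen_least)
    then show ?thesis using v by auto
  qed
  show "ideal_gen {u * v | u v. u \<in> ideal_gen S \<and> v \<in> ideal_gen T} \<subseteq> ?K"
  proof (rule ideal_gen_least[OF K], safe)
    fix u v assume "u \<in> ideal_gen S" "v \<in> ideal_gen T"
    then show "u * v \<in> ?K" by (rule 2)
  qed
  show "?K \<subseteq> ideal_gen {u * v | u v. u \<in> ideal_gen S \<and> v \<in> ideal_gen T}"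
  proof (rule ideal_gen_mono, safe)
    fix s t assume "s \<in> S" "t \<in> T"
    then show "\<exists>u v. s * t = u * v \<and> u \<in> ideal_gen S \<and> v \<in> ideal_gen T"
      using ideal_gen_sub[of S] ideal_gen_sub[of T] by auto
  qed
qed

lemma is_ideal_mult: "is_ideal (ideal_mult I J)"
  unfolding ideal_mult_def by (rule is_ideal_gen)

lemma is_ideal_pow: "is_ideal (ideal_pow I r)"
  by (cases r) (auto simp: ideal_UNIV is_ideal_mult)



abbreviation lk where "lk \<equiv> Poly_Mapping.lookup"
abbreviation sg where "sg \<equiv> Poly_Mapping.single"
abbreviation ks where "ks \<equiv> Poly_Mapping.keys"

lemma poly_expand: "p = (\<Sum>m\<in>ks p. sg m (lk p m))"
proof (rule poly_mapping_eqI)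
  fix k
  have "lk (\<Sum>m\<in>ks p. sg m (lk p m)) k = (\<Sum>m\<in>ks p. if m = k then lk p m else 0)"
    by (simp add: lookup_sum lookup_single when_def)
  also have "\<dots> = lk p k"
    by (cases "k \<in> ks p") (simp_all add: in_keys_iff)
  finally show "lk p k = lk (\<Sum>m\<in>ks p. sg m (lk p m)) k" by simp
qed

lemma poly_add_induct:
  fixes p :: "'a \<Rightarrow>\<^sub>0 'b::comm_monoid_add"
  assumes "P 0" "\<And>m a. P (sg m a)" "\<And>p q. P p \<Longrightarrow> P q \<Longrightarrow> P (p + q)"
  shows "P p"
proof -
  have "P (\<Sum>m\<in>A. sg m (lk p m))" if "finite A" for A
    using that by (induction A rule: finite_induct) (auto intro: assms)
  then show ?thesis by (metis finite_keys poly_expand)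
qed

lemma mono_map_superset:
  assumes "finite K" "ks p \<subseteq> K"
  shows "mono_map f p = (\<Sum>m\<in>K. sg (f m) (lk p m))"
  unfolding mono_map_def
  by (rule sum.mono_neutral_left) (use assms in \<open>auto simp: in_keys_iff\<close>)

lemma mono_map_add: "mono_map f (p + q) = mono_map f p + mono_map f q"
proof -
  let ?K = "ks p \<union> ks q"
  have "mono_map f (p + q) = (\<Sum>m\<in>?K. sg (f m) (lk (p+q) m))"
    by (rule mono_map_superset) (auto simp: keys_add)
  also have "\<dots> = (\<Sum>m\<in>?K. sg (f m) (lk p m)) + (\<Sum>m\<in>?K. sg (f m) (lk q m))"
    by (simp add: lookup_add single_add sum.distrib)
  also have "\<dots> = mono_map f p + mono_map f q"
    by (subst (1 2) mono_map_superset[where K = ?K]) auto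
  finally show ?thesis .
qed

lemma mono_map_zero[simp]: "mono_map f 0 = 0"
  by (simp add: mono_map_def)

lemma mono_map_single[simp]: "mono_map f (sg m a) = sg (f m) a"
  by (subst mono_map_superset[where K = "{m}"]) auto

lemma mono_map_uminus: "mono_map f (- p) = - mono_map f p"
  by (metis add.right_inverse add_eq_0_iff mono_map_add mono_map_zero)

lemma mono_map_diff: "mono_map f (p - q) = mono_map f p - mono_map f q"
  by (metis diff_conv_add_uminus mono_map_add mono_map_uminus)

lemma mono_map_sum: "mono_map f (sum g A) = (\<Sum>x\<in>A. mono_map f (g x))"
  by (induction A rule: infinite_finite_induct) (auto simp: mono_map_add)

lemma mono_map_comp: "mono_map f (mono_map g p) = mono_map (f \<circ> g) p"
  by (induction p rule: poly_add_induct) (auto simp: mono_map_add)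

lemma lookup_mono_map: "lk (mono_map f p) n = (\<Sum>m\<in>ks p. if f m = n then lk p m else 0)"
  unfolding mono_map_def by (simp add: lookup_sum lookup_single when_def)

definition addhom :: "(('v \<Rightarrow>\<^sub>0 nat) \<Rightarrow> ('w \<Rightarrow>\<^sub>0 nat)) \<Rightarrow> bool" where
  "addhom f \<longleftrightarrow> (\<forall>x y. f (x + y) = f x + f y)"

lemma addhom_zero: "addhom f \<Longrightarrow> f 0 = 0"
  unfolding addhom_def by (metis add.right_neutral add_left_cancel)

lemma mono_map_mult:
  fixes p q :: "('v,'k::comm_ring_1) mpoly"
  assumes "addhom f"
  shows "mono_map f (p * q) = mono_map f p * mono_map f q"
proof (induction p rule: poly_add_induct)
  case (2 m a)
  show ?case
  proof (induction q rule: poly_add_induct)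
    case (2 m' b)
    then show ?case using assms by (simp add: mult_single addhom_def)
  next
    case (3 p q)
    then show ?case by (simp add: distrib_left mono_map_add)
  qed simp
next
  case (3 p q)
  then show ?case by (simp add: distrib_right mono_map_add)
qed simp

lemma mono_map_one:
  assumes "addhom f"
  shows "mono_map f (1 :: ('v,'k::comm_ring_1) mpoly) = 1"
  using addhom_zero[OF assms] by (simp flip: single_one)

lemma mono_map_inj_lookup:
  assumes "inj f"
  shows "lk (mono_map f p) (f m) = lk p m"
proof -
  have "lk (mono_map f p) (f m) = (\<Sum>k\<in>ks p. if k = m then lk p k else 0)"
    unfolding lookup_mono_map using assms by (intro sum.cong) (auto dest: injD)
  also have "\<dots> = lk p m"
    by (cases "m \<in> ks p") (simp_all add: in_keys_iff)
  finally show ?thesis .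
qed

lemma mono_map_nrange: "n \<notin> range f \<Longrightarrow> lk (mono_map f p) n = 0"
  unfolding lookup_mono_map by (intro sum.neutral) auto

lemma mono_map_inj: "inj f \<Longrightarrow> inj (mono_map f)"
  by (rule injI, rule poly_mapping_eqI) (metis mono_map_inj_lookup)

lemma keys_mono_map_inj:
  assumes "inj f" shows "ks (mono_map f p) = f ` ks p"
proof safe
  fix n assume n: "n \<in> ks (mono_map f p)"
  then have "n \<in> range f" using mono_map_nrange by (metis in_keys_iff)
  then obtain m where "n = f m" by auto
  then show "n \<in> f ` ks p" using n mono_map_inj_lookup[OF assms] by (metis image_eqI in_keys_iff)
next
  fix m assume "m \<in> ks p"
  then show "f m \<in> ks (mono_map f p)" using mono_map_inj_lookup[OF assms] by (metis in_keys_iff)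
qed

lemma single_mult_shift: "sg m 1 * p = mono_map (\<lambda>k. m + k) p"
  by (induction p rule: poly_add_induct) (auto simp: mult_single distrib_left mono_map_add)

lemma ext_gen:
  fixes S :: "('v,'k::comm_ring_1) mpoly set"
  assumes "addhom f"
  shows "ideal_gen (mono_map f ` ideal_gen S) = ideal_gen (mono_map f ` S)"
proof (rule subset_antisym)
  let ?E = "ideal_gen (mono_map f ` S)"
  have E: "is_ideal ?E" by (rule is_ideal_gen)
  have "is_ideal {x. mono_map f x \<in> ?E}"
    unfolding is_ideal_def
  proof (intro conjI ballI allI)
    show "0 \<in> {x. mono_map f x \<in> ?E}" using is_idealD(1)[OF E] by simp
    show "x + y \<in> {x. mono_map f x \<in> ?E}" if "x \<in> {x. mono_map f x \<in> ?E}" "y \<in> {x. mono_map f x \<in> ?E}" for x y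
      using is_idealD(2)[OF E, of "mono_map f x" "mono_map f y"] that by (simp add: mono_map_add)
    show "r * x \<in> {x. mono_map f x \<in> ?E}" if "x \<in> {x. mono_map f x \<in> ?E}" for r x
      using is_idealD(3)[OF E, of "mono_map f x" "mono_map f r"] that by (simp add: mono_map_mult[OF assms])
  qed
  moreover have "S \<subseteq> {x. mono_map f x \<in> ?E}" using ideal_gen_sub[of "mono_map f ` S"] by auto
  ultimately have "ideal_gen S \<subseteq> {x. mono_map f x \<in> ?E}" by (rule ideal_gen_least)
  then have "mono_map f ` ideal_gen S \<subseteq> ?E" by auto
  then show "ideal_gen (mono_map f ` ideal_gen S) \<subseteq> ?E" by (rule ideal_gen_least[OF E])
  show "?E \<subseteq> ideal_gen (mono_map f ` ideal_gen S)"
    by (rule ideal_gen_mono) (use ideal_gen_sub[of S] in auto)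
qed



definition bin :: "('v \<Rightarrow>\<^sub>0 nat) \<Rightarrow> ('v \<Rightarrow>\<^sub>0 nat) \<Rightarrow> ('v,'k::comm_ring_1) mpoly" where
  "bin u v = sg u 1 - sg v 1"

definition kerm :: "(('v \<Rightarrow>\<^sub>0 nat) \<Rightarrow> ('w \<Rightarrow>\<^sub>0 nat)) \<Rightarrow> ('v,'k::comm_ring_1) mpoly set" where
  "kerm f = {p. mono_map f p = 0}"

definition bins :: "(('v \<Rightarrow>\<^sub>0 nat) \<Rightarrow> ('w \<Rightarrow>\<^sub>0 nat)) \<Rightarrow> ('v,'k::comm_ring_1) mpoly set" where
  "bins f = {bin u v | u v. f u = f v}"

lemma ker_ideal: "addhom f \<Longrightarrow> is_ideal (kerm f)"
  unfolding is_ideal_def kerm_def by (auto simp: mono_map_add mono_map_mult)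

lemma bin_in_ker: "f u = f v \<Longrightarrow> bin u v \<in> kerm f"
  by (simp add: kerm_def bin_def mono_map_diff)

lemma bins_ker: "bins f \<subseteq> kerm f"
  unfolding bins_def using bin_in_ker by blast

lemma binomial_bin: "binomial (bin u v)"
proof -
  have "ks (bin u v :: ('a,'b::comm_ring_1) mpoly) \<subseteq> {u, v}"
    unfolding bin_def by (auto simp: in_keys_iff lookup_minus lookup_single when_def split: if_splits)
  then have "card (ks (bin u v :: ('a,'b) mpoly)) \<le> card {u, v}" by (rule card_mono[rotated]) auto
  also have "\<dots> \<le> 2" by (simp add: card_insert_if)
  finally show ?thesis unfolding binomial_def .
qed

lemma ker_span:
  fixes p :: "('v,'k::comm_ring_1) mpoly"
  assumes "mono_map f p = 0"
  shows "p \<in> ideal_gen (bins f)"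
  using assms
proof (induction "card (ks p)" arbitrary: p rule: less_induct)
  case less
  have I: "is_ideal (ideal_gen (bins f :: ('v,'k) mpoly set))" by (rule is_ideal_gen)
  show ?case
  proof (cases "p = 0")
    case True then show ?thesis using is_idealD(1)[OF I] by simp
  next
    case False
    then obtain m where m: "m \<in> ks p" by (metis keys_eq_empty ex_in_conv)
    have "\<exists>m'\<in>ks p. m' \<noteq> m \<and> f m' = f m"
    proof (rule ccontr)
      assume "\<not> ?thesis"
      then have "lk (mono_map f p) (f m) = (\<Sum>k\<in>ks p. if k = m then lk p k else 0)"
        unfolding lookup_mono_map by (intro sum.cong) auto
      also have "\<dots> = lk p m" using m by simp
      finally show False using less.prems m by (simp add: in_keys_iff)
    qed
    then obtain m' where m': "m' \<in> ks p" "m' \<noteq> m" "f m' = f m" by blast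
    define c where "c = lk p m"
    define q where "q = sg m c - sg m' c"
    have q: "q = sg 0 c * bin m m'"
      by (simp add: q_def bin_def right_diff_distrib mult_single)
    define p' where "p' = p - q"
    have keys: "ks p' \<subseteq> ks p - {m}"
    proof
      fix k assume k: "k \<in> ks p'"
      have "lk p' k = lk p k - (c when m = k) + (c when m' = k)"
        by (simp add: p'_def q_def lookup_minus lookup_single)
      with k m' show "k \<in> ks p - {m}"
        by (auto simp: in_keys_iff c_def when_def split: if_splits)
    qed
    then have "ks p' \<subset> ks p" using m by blast
    then have "card (ks p') < card (ks p)" by (rule psubset_card_mono[OF finite_keys])
    moreover have "mono_map f p' = 0"
      using less.prems m' by (simp add: p'_def q_def mono_map_diff)
    ultimately have "p' \<in> ideal_gen (bins f)" using less.hyps by blast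
    moreover have "q \<in> ideal_gen (bins f)"
    proof -
      have "bin m m' \<in> bins f" unfolding bins_def using m'(3)[symmetric] by blast
      then have "bin m m' \<in> ideal_gen (bins f)" using ideal_gen_sub by blast
      then show ?thesis unfolding q by (rule is_idealD(3)[OF I])
    qed
    ultimately have "p' + q \<in> ideal_gen (bins f)" by (rule is_idealD(2)[OF I])
    then show ?thesis by (simp add: p'_def)
  qed
qed

lemma dickson:
  fixes g :: "'b \<Rightarrow> 'v \<Rightarrow> nat"
  assumes "finite A"
  shows "\<exists>S0\<subseteq>S. finite S0 \<and> (\<forall>s\<in>S. \<exists>t\<in>S0. \<forall>v\<in>A. g t v \<le> g s v)"
  using assms
proof (induction A arbitrary: S rule: finite_induct)
  case empty
  show ?case
  proof (cases "S = {}")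
    case True then show ?thesis by auto
  next
    case False
    then obtain x where "x \<in> S" by auto
    then show ?thesis by (intro exI[of _ "{x}"]) auto
  qed
next
  case (insert a A)
  obtain F where F: "F \<subseteq> S" "finite F" "\<forall>s\<in>S. \<exists>t\<in>F. \<forall>v\<in>A. g t v \<le> g s v"
    using insert.IH[of S] by blast
  define Y where "Y = Max (insert 0 ((\<lambda>t. g t a) ` F))"
  have "\<forall>k. \<exists>Fk. Fk \<subseteq> {s\<in>S. g s a = k} \<and> finite Fk \<and> (\<forall>s\<in>{s\<in>S. g s a = k}. \<exists>t\<in>Fk. \<forall>v\<in>A. g t v \<le> g s v)"
    using insert.IH by blast
  then have "\<exists>Fk. \<forall>k. Fk k \<subseteq> {s\<in>S. g s a = k} \<and> finite (Fk k) \<and> (\<forall>s\<in>{s\<in>S. g s a = k}. \<exists>t\<in>Fk k. \<forall>v\<in>A. g t v \<le> g s v)"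
    by (rule choice)
  then obtain Fk where Fk_all: "\<forall>k. Fk k \<subseteq> {s\<in>S. g s a = k} \<and> finite (Fk k) \<and> (\<forall>s\<in>{s\<in>S. g s a = k}. \<exists>t\<in>Fk k. \<forall>v\<in>A. g t v \<le> g s v)"
    by (elim exE)
  have Fk: "\<And>k. Fk k \<subseteq> {s\<in>S. g s a = k}" "\<And>k. finite (Fk k)"
    "\<And>k. \<forall>s\<in>{s\<in>S. g s a = k}. \<exists>t\<in>Fk k. \<forall>v\<in>A. g t v \<le> g s v"
    using Fk_all by simp_all
  define S0 where "S0 = F \<union> (\<Union>k\<in>{..Y}. Fk k)"
  have "S0 \<subseteq> S" using F(1) Fk(1) unfolding S0_def by blast
  moreover have "finite S0" using F(2) Fk(2) unfolding S0_def by blast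
  moreover have "\<exists>t\<in>S0. \<forall>v\<in>insert a A. g t v \<le> g s v" if s: "s \<in> S" for s
  proof -
    obtain t where t: "t \<in> F" "\<forall>v\<in>A. g t v \<le> g s v" using F(3) s by blast
    show ?thesis
    proof (cases "g t a \<le> g s a")
      case True then show ?thesis using t unfolding S0_def by blast
    next
      case False
      have "g t a \<le> Y" unfolding Y_def using t(1) F(2) by (intro Max_ge) auto
      with False have le: "g s a \<le> Y" by simp
      obtain t' where t': "t' \<in> Fk (g s a)" "\<forall>v\<in>A. g t' v \<le> g s v"
        using Fk(3)[of "g s a"] s by blast
      have "g t' a = g s a" using Fk(1) t'(1) by blast
      moreover have "t' \<in> S0" unfolding S0_def using le t'(1) by blast
      ultimately show ?thesis using t'(2) by (intro bexI[of _ t']) auto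
    qed
  qed
  ultimately show ?case by blast
qed

definition deg :: "('v::finite \<Rightarrow>\<^sub>0 nat) \<Rightarrow> nat" where
  "deg m = (\<Sum>x\<in>UNIV. lk m x)"

lemma deg_add: "deg (u + w) = deg u + deg w"
  by (simp add: deg_def lookup_add sum.distrib)

lemma deg_zero: "deg m = 0 \<Longrightarrow> m = 0"
  by (rule poly_mapping_eqI) (simp add: deg_def)

lemma lookup_Abs_fin[simp]: "lk (Abs_poly_mapping (h :: 'a::finite \<Rightarrow> 'b::zero)) = h"
  by (simp add: lookup_Abs_poly_mapping)

lemma kernel_fin_gen:
  fixes f :: "('v::finite \<Rightarrow>\<^sub>0 nat) \<Rightarrow> ('w \<Rightarrow>\<^sub>0 nat)"
  assumes hom: "addhom f"
  shows "\<exists>G. finite G \<and> G \<subseteq> (bins f :: ('v,'k::comm_ring_1) mpoly set) \<and> ideal_gen G = kerm f"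
proof -
  define S where "S = {(u,v). f u = f v \<and> (u,v) \<noteq> (0,0)}"
  define g where "g = (\<lambda>(u::'v \<Rightarrow>\<^sub>0 nat,v::'v \<Rightarrow>\<^sub>0 nat) z. case z of Inl x \<Rightarrow> lk u x | Inr x \<Rightarrow> lk v x)"
  obtain S0 where S0: "S0 \<subseteq> S" "finite S0" "\<forall>s\<in>S. \<exists>t\<in>S0. \<forall>z\<in>(UNIV :: ('v + 'v) set). g t z \<le> g s z"
    using dickson[of "UNIV :: ('v + 'v) set" S g] by auto
  define G where "G = (\<lambda>(u,v). bin u v :: ('v,'k) mpoly) ` S0"
  have GB: "G \<subseteq> bins f" unfolding G_def bins_def using S0(1) S_def by auto
  have I: "is_ideal (ideal_gen G)" by (rule is_ideal_gen)
  have main: "\<forall>u v. f u = f v \<longrightarrow> deg u + deg v = n \<longrightarrow> bin u v \<in> ideal_gen G" for n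
  proof (induction n rule: less_induct)
    case (less n)
    show ?case
    proof (intro allI impI)
      fix u v assume uv: "f u = f v" "deg u + deg v = n"
      show "bin u v \<in> ideal_gen G"
      proof (cases "(u,v) = (0,0)")
        case True then show ?thesis using is_idealD(1)[OF I] by (simp add: bin_def)
      next
        case False
        then have "(u,v) \<in> S" using uv S_def by auto
        then obtain u0 v0 where t: "(u0,v0) \<in> S0" "\<forall>z. g (u0,v0) z \<le> g (u,v) z" using S0(3) by fastforce
        have le: "lk u0 x \<le> lk u x" "lk v0 x \<le> lk v x" for x
          using t(2)[rule_format, of "Inl x"] t(2)[rule_format, of "Inr x"] by (auto simp: g_def)
        define w where "w = Abs_poly_mapping (\<lambda>x. lk u x - lk u0 x)"
        define w' where "w' = Abs_poly_mapping (\<lambda>x. lk v x - lk v0 x)"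
        have u: "u = u0 + w" by (rule poly_mapping_eqI) (use le in \<open>simp add: w_def lookup_add\<close>)
        have v: "v = v0 + w'" by (rule poly_mapping_eqI) (use le in \<open>simp add: w'_def lookup_add\<close>)
        have f0: "f u0 = f v0" "(u0,v0) \<noteq> (0,0)" using t(1) S0(1) S_def by auto
        have fw: "f w = f w'" using uv(1) hom f0(1) unfolding u v addhom_def by simp
        have "deg u0 + deg v0 > 0"
        proof (rule ccontr)
          assume "\<not> deg u0 + deg v0 > 0"
          then have "u0 = 0" "v0 = 0" using deg_zero by auto
          then show False using f0(2) by simp
        qed
        moreover have "deg u0 + deg w + (deg v0 + deg w') = n" using uv(2) unfolding u v deg_add .
        ultimately have "deg w + deg w' < n" by linarith
        then have IH: "bin w w' \<in> ideal_gen G" using less.IH fw by blast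
        have "bin u0 v0 \<in> G" unfolding G_def using t(1) by force
        then have B0: "bin u0 v0 \<in> ideal_gen G" using ideal_gen_sub by blast
        have eq: "bin u v = sg w 1 * bin u0 v0 + sg v0 1 * bin w w'"
          unfolding u v bin_def by (simp add: right_diff_distrib mult_single add.commute)
        show ?thesis unfolding eq using is_idealD[OF I] B0 IH by blast
      qed
    qed
  qed
  have "kerm f \<subseteq> ideal_gen G"
  proof
    fix p :: "('v,'k) mpoly" assume "p \<in> kerm f"
    then have "p \<in> ideal_gen (bins f)" using ker_span by (simp add: kerm_def)
    moreover have "ideal_gen (bins f) \<subseteq> ideal_gen G"
      by (rule ideal_gen_least[OF I]) (use main in \<open>auto simp: bins_def\<close>)
    ultimately show "p \<in> ideal_gen G" by blast
  qed
  moreover have "ideal_gen G \<subseteq> kerm f"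
    by (rule ideal_gen_least[OF ker_ideal[OF hom]]) (use GB bins_ker in blast)
  ultimately show ?thesis using GB S0(2) G_def by blast
qed

lemma minimal_subset:
  assumes "finite G0" "ideal_gen G0 = I"
  shows "\<exists>G\<subseteq>G0. minimal_gens G I"
proof -
  define P where "P H \<longleftrightarrow> H \<subseteq> G0 \<and> ideal_gen H = I" for H
  have "P G0" using assms by (simp add: P_def)
  then have "\<exists>H. P H \<and> (\<forall>H'. P H' \<longrightarrow> card H \<le> card H')" by (rule ex_has_least_nat)
  then obtain H where H0: "P H" "\<forall>H'. P H' \<longrightarrow> card H \<le> card H'" by (elim exE conjE)
  have H: "H \<subseteq> G0 \<and> ideal_gen H = I" "\<forall>H'. H' \<subseteq> G0 \<and> ideal_gen H' = I \<longrightarrow> card H \<le> card H'"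
    using H0 unfolding P_def by auto
  have "minimal_gens H I"
    unfolding minimal_gens_def
  proof (intro conjI allI impI)
    show "ideal_gen H = I" using H(1) by blast
    fix H' assume "H' \<subset> H"
    moreover have "finite H" using H(1) assms(1) finite_subset by auto
    ultimately have "card H' < card H" using psubset_card_mono by auto
    moreover have "H' \<subseteq> G0" using \<open>H' \<subset> H\<close> H(1) by auto
    ultimately show "ideal_gen H' \<noteq> I" using H(2) by force
  qed
  then show ?thesis using H(1) by blast
qed



definition scale :: "('v::finite \<Rightarrow> nat) \<Rightarrow> ('v \<Rightarrow>\<^sub>0 nat) \<Rightarrow> ('v \<Rightarrow>\<^sub>0 nat)" where
  "scale C m = Abs_poly_mapping (\<lambda>v. C v * lk m v)"

lemma lookup_scale[simp]: "lk (scale C m) v = C v * lk m v"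
  by (simp add: scale_def)

lemma scale_addhom: "addhom (scale C)"
  unfolding addhom_def by (auto intro!: poly_mapping_eqI simp: lookup_add algebra_simps)

lemma scale_inj: assumes "\<forall>v. C v > 0" shows "inj (scale C)"
proof (rule injI, rule poly_mapping_eqI)
  fix x y v assume "scale C x = scale C y"
  then have "lk (scale C x) v = lk (scale C y) v" by simp
  then show "lk x v = lk y v" using assms[rule_format, of v] by simp
qed

definition pb :: "('v::finite \<Rightarrow> nat) \<Rightarrow> ('v,'k::comm_ring_1) mpoly \<Rightarrow> ('v,'k) mpoly" where
  "pb C p = Abs_poly_mapping (\<lambda>m. lk p (scale C m))"

context
  fixes C :: "'v::finite \<Rightarrow> nat"
  assumes Cpos: "\<forall>v. C v > 0"
begin

lemma lookup_pb: "lk (pb C p) m = lk p (scale C m)"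
proof -
  have "{m. lk p (scale C m) \<noteq> 0} \<subseteq> scale C -` ks p" by (auto simp: in_keys_iff)
  moreover have "finite (scale C -` ks p)"
    by (rule finite_vimageI[OF finite_keys]) (use scale_inj[OF Cpos] in simp)
  ultimately have "finite {m. lk p (scale C m) \<noteq> 0}" by (rule finite_subset)
  then show ?thesis by (simp add: pb_def lookup_Abs_poly_mapping)
qed

lemma pb_add: "pb C (p + q) = pb C p + pb C q"
  by (rule poly_mapping_eqI) (simp add: lookup_pb lookup_add)

lemma pb_zero: "pb C 0 = 0"
  by (rule poly_mapping_eqI) (simp add: lookup_pb)

lemma pb_sum: "pb C (sum g A) = (\<Sum>x\<in>A. pb C (g x))"
  by (induction A rule: infinite_finite_induct) (auto simp: pb_add pb_zero)

lemma pb_delta: "pb C (mono_map (scale C) q) = q"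
  by (rule poly_mapping_eqI) (simp add: lookup_pb mono_map_inj_lookup[OF scale_inj[OF Cpos]])

lemma pb_shift:
  "pb C (sg m 1 * mono_map (scale C) q) \<in> {sg m1 1 * q | m1. True} \<union> {0}"
proof (cases "m \<in> range (scale C)")
  case True
  then obtain m1 where m1: "m = scale C m1" by auto
  have "sg m 1 * mono_map (scale C) q = mono_map (\<lambda>k. m + k) (mono_map (scale C) q)"
    by (rule single_mult_shift)
  also have "\<dots> = mono_map ((\<lambda>k. m + k) \<circ> scale C) q" by (rule mono_map_comp)
  also have "(\<lambda>k. m + k) \<circ> scale C = scale C \<circ> (\<lambda>k. m1 + k)"
    using scale_addhom[of C] unfolding m1 addhom_def by (simp add: fun_eq_iff)
  also have "mono_map (scale C \<circ> (\<lambda>k. m1 + k)) q = mono_map (scale C) (mono_map (\<lambda>k. m1 + k) q)"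
    by (rule mono_map_comp[symmetric])
  finally have "pb C (sg m 1 * mono_map (scale C) q) = sg m1 1 * q"
    by (simp add: pb_delta single_mult_shift)
  then show ?thesis by blast
next
  case False
  have "pb C (sg m 1 * mono_map (scale C) q) = 0"
  proof (rule poly_mapping_eqI)
    fix n
    have "sg m 1 * mono_map (scale C) q = mono_map ((\<lambda>k. m + k) \<circ> scale C) q"
      by (simp add: single_mult_shift mono_map_comp)
    moreover have "scale C n \<notin> range ((\<lambda>k. m + k) \<circ> scale C)"
    proof
      assume "scale C n \<in> range ((\<lambda>k. m + k) \<circ> scale C)"
      then obtain k where k: "scale C n = m + scale C k" by auto
      have "m = scale C (Abs_poly_mapping (\<lambda>v. lk n v - lk k v))"
      proof (rule poly_mapping_eqI)
        fix v
        have "C v * lk n v = lk m v + C v * lk k v"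
          using arg_cong[OF k, of "\<lambda>x. lk x v"] by (simp add: lookup_add)
        then show "lk m v = lk (scale C (Abs_poly_mapping (\<lambda>v. lk n v - lk k v))) v"
          by (simp add: diff_mult_distrib2)
      qed
      then show False using False by auto
    qed
    ultimately show "lk (pb C (sg m 1 * mono_map (scale C) q)) n = lk 0 n"
      by (simp add: lookup_pb mono_map_nrange)
  qed
  then show ?thesis by blast
qed

lemma contraction:
  fixes A :: "('v,'k::comm_ring_1) mpoly set"
  assumes A: "is_ideal A" and q: "mono_map (scale C) q \<in> ideal_gen (mono_map (scale C) ` A)"
  shows "q \<in> A"
proof -
  define Cs where "Cs = {p. \<forall>f. pb C (f * p) \<in> A}"
  have "is_ideal Cs"
    unfolding is_ideal_def
  proof (intro conjI ballI allI)
    show "0 \<in> Cs" using is_idealD(1)[OF A] by (simp add: Cs_def pb_zero)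
    show "x + y \<in> Cs" if "x \<in> Cs" "y \<in> Cs" for x y
      using that is_idealD(2)[OF A] by (simp add: Cs_def distrib_left pb_add)
    show "r * x \<in> Cs" if "x \<in> Cs" for r x
      using that by (simp add: Cs_def mult.assoc[symmetric])
  qed
  moreover have "mono_map (scale C) ` A \<subseteq> Cs"
  proof safe
    fix a assume a: "a \<in> A"
    show "mono_map (scale C) a \<in> Cs" unfolding Cs_def
    proof (intro CollectI allI)
      fix f :: "('v,'k) mpoly"
      have "f * mono_map (scale C) a = (\<Sum>m\<in>ks f. sg m (lk f m) * mono_map (scale C) a)"
        by (subst poly_expand[of f]) (simp add: sum_distrib_right)
      also have "\<dots> = (\<Sum>m\<in>ks f. sg m 1 * mono_map (scale C) (sg 0 (lk f m) * a))"
      proof (rule sum.cong[OF refl])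
        fix m
        have "sg m (lk f m) = sg m 1 * sg 0 (lk f m)" by (simp add: mult_single)
        moreover have "mono_map (scale C) (sg 0 (lk f m) * a) = sg 0 (lk f m) * mono_map (scale C) a"
          by (simp add: mono_map_mult[OF scale_addhom[of C]] addhom_zero[OF scale_addhom[of C]])
        ultimately show "sg m (lk f m) * mono_map (scale C) a = sg m 1 * mono_map (scale C) (sg 0 (lk f m) * a)"
          by (simp add: mult.assoc)
      qed
      finally have eq: "pb C (f * mono_map (scale C) a) = (\<Sum>m\<in>ks f. pb C (sg m 1 * mono_map (scale C) (sg 0 (lk f m) * a)))"
        by (simp add: pb_sum)
      show "pb C (f * mono_map (scale C) a) \<in> A" unfolding eq
      proof (rule ideal_sum[OF A])
        fix m
        have a': "sg 0 (lk f m) * a \<in> A" using a by (rule is_idealD(3)[OF A])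
        show "pb C (sg m 1 * mono_map (scale C) (sg 0 (lk f m) * a)) \<in> A"
          using pb_shift[of m "sg 0 (lk f m) * a"] is_idealD(3)[OF A a'] is_idealD(1)[OF A] by auto
      qed
    qed
  qed
  ultimately have "ideal_gen (mono_map (scale C) ` A) \<subseteq> Cs" by (rule ideal_gen_least)
  with q have "mono_map (scale C) q \<in> Cs" by (rule subsetD[rotated])
  then have "pb C (1 * mono_map (scale C) q) \<in> A" unfolding Cs_def by (elim CollectE allE)
  then show ?thesis by (simp add: pb_delta)
qed

definition ext :: "('v,'k::comm_ring_1) mpoly set \<Rightarrow> ('v,'k) mpoly set" where
  "ext A = ideal_gen (mono_map (scale C) ` A)"

lemma ext_inj:
  assumes "is_ideal A" "is_ideal B" "ext A = ext B"
  shows "A = B"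
proof -
  have *: "X \<subseteq> Y" if "is_ideal X" "is_ideal Y" "ext X = ext Y" for X Y :: "('v,'k::comm_ring_1) mpoly set"
  proof
    fix x assume "x \<in> X"
    then have "mono_map (scale C) x \<in> mono_map (scale C) ` X" by (rule imageI)
    then have "mono_map (scale C) x \<in> ext X" unfolding ext_def by (rule subsetD[OF ideal_gen_sub])
    then have "mono_map (scale C) x \<in> ideal_gen (mono_map (scale C) ` Y)" using that(3) unfolding ext_def by simp
    then show "x \<in> Y" by (rule contraction[OF that(2)])
  qed
  show ?thesis using *[OF assms] *[OF assms(2,1) assms(3)[symmetric]] by blast
qed

lemma ext_gen': "ext (ideal_gen S) = ext S"
  unfolding ext_def by (rule ext_gen[OF scale_addhom])

lemma ext_UNIV: "ext (UNIV :: ('v,'k::comm_ring_1) mpoly set) = UNIV"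
proof -
  have "mono_map (scale C) 1 = (1 :: ('v,'k) mpoly)" by (rule mono_map_one[OF scale_addhom])
  moreover have "mono_map (scale C) (1 :: ('v,'k) mpoly) \<in> mono_map (scale C) ` UNIV" by (rule rangeI)
  ultimately have "(1 :: ('v,'k) mpoly) \<in> mono_map (scale C) ` UNIV" by simp
  then have "(1 :: ('v,'k) mpoly) \<in> ext UNIV" unfolding ext_def by (rule subsetD[OF ideal_gen_sub])
  then show ?thesis unfolding ext_def by (intro ideal_one[OF is_ideal_gen])
qed

lemma ext_mult: "ext (ideal_mult A B) = ideal_mult (ext A) (ext B)"
proof -
  have "ext (ideal_mult A B) = ext {x * y |x y. x \<in> A \<and> y \<in> B}"
    unfolding ideal_mult_def by (rule ext_gen')
  also have "\<dots> = ideal_gen {s * t |s t. s \<in> mono_map (scale C) ` A \<and> t \<in> mono_map (scale C) ` B}"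
    unfolding ext_def
  proof (rule arg_cong[where f = ideal_gen])
    show "mono_map (scale C) ` {x * y |x y. x \<in> A \<and> y \<in> B} =
       {s * t |s t. s \<in> mono_map (scale C) ` A \<and> t \<in> mono_map (scale C) ` B}" (is "?L = ?R")
    proof
      show "?L \<subseteq> ?R"
      proof
        fix z assume "z \<in> ?L"
        then obtain x y where xy: "x \<in> A" "y \<in> B" "z = mono_map (scale C) (x * y)" by blast
        then show "z \<in> ?R"
          by (intro CollectI exI[of _ "mono_map (scale C) x"] exI[of _ "mono_map (scale C) y"])
             (simp add: mono_map_mult[OF scale_addhom[of C]])
      qed
      show "?R \<subseteq> ?L"
      proof
        fix z assume "z \<in> ?R"
        then obtain x y where xy: "x \<in> A" "y \<in> B" "z = mono_map (scale C) x * mono_map (scale C) y" by blast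
        then have "z = mono_map (scale C) (x * y)" by (simp add: mono_map_mult[OF scale_addhom[of C]])
        moreover have "x * y \<in> {x * y |x y. x \<in> A \<and> y \<in> B}" using xy by blast
        ultimately show "z \<in> ?L" by blast
      qed
    qed
  qed
  also have "\<dots> = ideal_mult (ext A) (ext B)"
    unfolding ideal_mult_def ext_def by (rule ideal_gen_prod[symmetric])
  finally show ?thesis .
qed

lemma ext_pow: "ext (ideal_pow A r) = ideal_pow (ext A) r"
  by (induction r) (simp_all add: ext_UNIV ext_mult)

lemma ext_mono: "A \<subseteq> B \<Longrightarrow> ext A \<subseteq> ext B"
  unfolding ext_def by (rule ideal_gen_mono) (rule image_mono)

end



lemma lookup_rees_Some: "lk (rees_mono a b m) (Some i) = lk m (Inl i) + (\<Sum>j\<in>UNIV. lk m (Inr j) * gen_exp a b j i)"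
  by (simp add: rees_mono_def)

lemma lookup_rees_None: "lk (rees_mono a b m) None = (\<Sum>j\<in>UNIV. lk m (Inr j))"
  by (simp add: rees_mono_def)

lemma rees_addhom: "addhom (rees_mono a b)"
  unfolding addhom_def
proof (intro allI, rule poly_mapping_eqI)
  fix x y v
  show "lk (rees_mono a b (x + y)) v = lk (rees_mono a b x + rees_mono a b y) v"
    by (cases v) (simp_all add: lookup_rees_Some lookup_rees_None lookup_add sum.distrib distrib_right)
qed

lemma rees_ideal_kerm: "rees_ideal a b = kerm (rees_mono a b)"
  by (simp add: rees_ideal_def kerm_def)

lemma delta_scale: "delta c = mono_map (scale (case_sum c (\<lambda>_. 1)))"
proof -
  have "delta_mono c = scale (case_sum c (\<lambda>_. 1))"
  proof (rule ext, rule poly_mapping_eqI)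
    fix m v
    show "lk (delta_mono c m) v = lk (scale (case_sum c (\<lambda>_. 1)) m) v"
      by (cases v) (simp_all add: delta_mono_def)
  qed
  then show ?thesis unfolding delta_def by simp
qed

lemma tdeg_scale: "tdeg (scale (case_sum c (\<lambda>_. 1)) m) = tdeg m"
  by (simp add: tdeg_def)

lemma xmon_scale:
  "mono_map (scale c) (xmon v :: ('n::finite,'k::comm_ring_1) mpoly) = xmon (\<lambda>i. c i * v i)"
proof -
  have "scale c (Abs_poly_mapping v) = Abs_poly_mapping (\<lambda>i. c i * v i)"
    by (rule poly_mapping_eqI) simp
  then show ?thesis by (simp add: xmon_def)
qed



lemma part1a:
  fixes a b a' b' c :: "'n::finite \<Rightarrow> nat"
  assumes cpos: "\<forall>i. c i > 0" and gen: "\<And>j i. gen_exp a b j i = c i * gen_exp a' b' j i"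
  shows "(rees_ideal a b :: ('n + 'n option,'k::comm_ring_1) mpoly set)
     = ideal_gen (mono_map (scale (case_sum c (\<lambda>_. 1))) ` rees_ideal a' b')"
proof -
  define C1 :: "'n + 'n option \<Rightarrow> nat" where "C1 = case_sum c (\<lambda>_. 1)"
  define Cx :: "'n option \<Rightarrow> nat" where "Cx = case_option 1 c"
  let ?d = "mono_map (scale C1) :: ('n + 'n option,'k) mpoly \<Rightarrow> _"
  let ?E = "ideal_gen (?d ` rees_ideal a' b')"
  have E: "is_ideal ?E" by (rule is_ideal_gen)
  have comp: "rees_mono a b \<circ> scale C1 = scale Cx \<circ> rees_mono a' b'"
  proof (rule ext, rule poly_mapping_eqI)
    fix m v
    show "lk ((rees_mono a b \<circ> scale C1) m) v = lk ((scale Cx \<circ> rees_mono a' b') m) v"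
    proof (cases v)
      case None then show ?thesis by (simp add: lookup_rees_None C1_def Cx_def)
    next
      case (Some i) then show ?thesis
        by (simp add: lookup_rees_Some C1_def Cx_def gen sum_distrib_left distrib_left mult.left_commute)
    qed
  qed
  have sub1: "?d ` rees_ideal a' b' \<subseteq> rees_ideal a b"
  proof
    fix z assume "z \<in> ?d ` rees_ideal a' b'"
    then obtain p where p: "p \<in> rees_ideal a' b'" "z = ?d p" by blast
    have "mono_map (rees_mono a b) z = mono_map (rees_mono a b \<circ> scale C1) p"
      by (simp add: p(2) mono_map_comp)
    also have "\<dots> = mono_map (scale Cx) (mono_map (rees_mono a' b') p)"
      by (simp add: comp mono_map_comp)
    also have "\<dots> = 0" using p(1) by (simp add: rees_ideal_def)
    finally show "z \<in> rees_ideal a b" by (simp add: rees_ideal_def)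
  qed
  have binE: "bin u v \<in> ?E" if uv: "rees_mono a b u = rees_mono a b v" for u v
  proof -
    define r :: "'n + 'n option \<Rightarrow>\<^sub>0 nat" where "r = Abs_poly_mapping (\<lambda>x. case x of Inl i \<Rightarrow> lk u (Inl i) mod c i | Inr j \<Rightarrow> 0)"
    define qu :: "'n + 'n option \<Rightarrow>\<^sub>0 nat" where "qu = Abs_poly_mapping (\<lambda>x. case x of Inl i \<Rightarrow> lk u (Inl i) div c i | Inr j \<Rightarrow> lk u (Inr j))"
    define qv :: "'n + 'n option \<Rightarrow>\<^sub>0 nat" where "qv = Abs_poly_mapping (\<lambda>x. case x of Inl i \<Rightarrow> lk v (Inl i) div c i | Inr j \<Rightarrow> lk v (Inr j))"
    define Yu where "Yu i = (\<Sum>j\<in>UNIV. lk u (Inr j) * gen_exp a' b' j i)" for i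
    define Yv where "Yv i = (\<Sum>j\<in>UNIV. lk v (Inr j) * gen_exp a' b' j i)" for i
    have key: "lk u (Inl i) + c i * Yu i = lk v (Inl i) + c i * Yv i" for i
    proof -
      have "lk (rees_mono a b u) (Some i) = lk (rees_mono a b v) (Some i)" using uv by simp
      then show ?thesis
        by (simp add: lookup_rees_Some gen Yu_def Yv_def sum_distrib_left mult.left_commute)
    qed
    have modeq: "lk u (Inl i) mod c i = lk v (Inl i) mod c i" for i
    proof -
      have "(lk u (Inl i) + c i * Yu i) mod c i = (lk v (Inl i) + c i * Yv i) mod c i" using key by simp
      then show ?thesis by simp
    qed
    have diveq: "lk u (Inl i) div c i + Yu i = lk v (Inl i) div c i + Yv i" for i
    proof -
      have "(lk u (Inl i) + c i * Yu i) div c i = (lk v (Inl i) + c i * Yv i) div c i" using key by simp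
      then show ?thesis using cpos[rule_format, of i] by simp
    qed
    have Neq: "(\<Sum>j\<in>UNIV. lk u (Inr j)) = (\<Sum>j\<in>UNIV. lk v (Inr j))"
    proof -
      have "lk (rees_mono a b u) None = lk (rees_mono a b v) None" using uv by simp
      then show ?thesis by (simp add: lookup_rees_None)
    qed
    have udec: "u = r + scale C1 qu"
    proof (rule poly_mapping_eqI)
      fix x show "lk u x = lk (r + scale C1 qu) x"
        by (cases x) (simp_all add: lookup_add r_def qu_def C1_def)
    qed
    have vdec: "v = r + scale C1 qv"
    proof (rule poly_mapping_eqI)
      fix x show "lk v x = lk (r + scale C1 qv) x"
        by (cases x) (simp_all add: lookup_add r_def qv_def C1_def modeq)
    qed
    have rq: "rees_mono a' b' qu = rees_mono a' b' qv"
    proof (rule poly_mapping_eqI)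
      fix x show "lk (rees_mono a' b' qu) x = lk (rees_mono a' b' qv) x"
      proof (cases x)
        case None then show ?thesis using Neq by (simp add: lookup_rees_None qu_def qv_def)
      next
        case (Some i) then show ?thesis
          using diveq[of i] by (simp add: lookup_rees_Some qu_def qv_def Yu_def Yv_def)
      qed
    qed
    have "bin qu qv \<in> rees_ideal a' b'" using bin_in_ker[of "rees_mono a' b'", OF rq] by (simp add: rees_ideal_kerm)
    then have "?d (bin qu qv) \<in> ?d ` rees_ideal a' b'" by (rule imageI)
    then have d: "?d (bin qu qv) \<in> ?E" by (rule subsetD[OF ideal_gen_sub])
    have "bin u v = bin (r + scale C1 qu) (r + scale C1 qv)" using udec vdec by simp
    also have "\<dots> = sg r 1 * ?d (bin qu qv)"
      by (simp add: bin_def mono_map_diff mult_single right_diff_distrib)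
    finally have "bin u v = sg r 1 * ?d (bin qu qv)" .
    then show ?thesis using is_idealD(3)[OF E d] by simp
  qed
  show ?thesis unfolding C1_def[symmetric]
  proof (rule subset_antisym)
    have s1: "rees_ideal a b \<subseteq> ideal_gen (bins (rees_mono a b))"
      unfolding rees_ideal_def by (auto intro: ker_span)
    have s2: "bins (rees_mono a b) \<subseteq> ?E"
    proof
      fix z :: "('n + 'n option,'k) mpoly" assume "z \<in> bins (rees_mono a b)"
      then obtain u v where "z = bin u v" "rees_mono a b u = rees_mono a b v" unfolding bins_def by blast
      then show "z \<in> ?E" using binE by simp
    qed
    show "rees_ideal a b \<subseteq> ?E" using s1 ideal_gen_least[OF E s2] by (rule order_trans)
    show "?E \<subseteq> rees_ideal a b"
      by (rule ideal_gen_least[OF _ sub1]) (simp add: rees_ideal_kerm ker_ideal rees_addhom)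
  qed
qed



theorem mainTheorem6:
  fixes a b :: "'n::finite \<Rightarrow> nat"
  assumes lt: "\<forall>i. b i < a i"
    and two: "\<exists>i j. i \<noteq> j \<and> b i \<noteq> 0 \<and> b j \<noteq> 0"
  defines "a' \<equiv> (\<lambda>i. if b i \<noteq> 0 then a i div gcd (a i) (b i) else a i)"
    and "b' \<equiv> (\<lambda>i. if b i \<noteq> 0 then b i div gcd (a i) (b i) else 0)"
    and "c \<equiv> (\<lambda>i. if b i \<noteq> 0 then gcd (a i) (b i) else 1)"
  shows "(rees_ideal a b :: ('n + 'n option, 'k::field) mpoly set) = ideal_gen (delta c ` (rees_ideal a' b' :: ('n + 'n option, 'k) mpoly set))
      \<and> (\<exists>G G' \<sigma>. finite G' \<and> minimal_gens G' (rees_ideal a' b' :: ('n + 'n option, 'k) mpoly set)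
            \<and> minimal_gens G (rees_ideal a b :: ('n + 'n option, 'k) mpoly set) \<and> (\<forall>g\<in>G. binomial g) \<and> (\<forall>g\<in>G'. binomial g)
            \<and> bij_betw \<sigma> G' G \<and> (\<forall>g\<in>G'. tdegs (\<sigma> g) = tdegs g))
      \<and> (is_reduction (pure_ideal a' :: ('n,'k) mpoly set) (mon_ideal a' b') \<longrightarrow>
           is_reduction (pure_ideal a :: ('n,'k) mpoly set) (mon_ideal a b)
           \<and> red_num (pure_ideal a :: ('n,'k) mpoly set) (mon_ideal a b)
             = red_num (pure_ideal a' :: ('n,'k) mpoly set) (mon_ideal a' b'))"
proof -
  have cpos: "\<forall>i. c i > 0" unfolding c_def by simp
  have aeq: "a i = c i * a' i" for i
    unfolding a'_def c_def using dvd_mult_div_cancel[OF gcd_dvd1[of "a i" "b i"]] by auto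
  have beq: "b i = c i * b' i" for i
    unfolding b'_def c_def using dvd_mult_div_cancel[OF gcd_dvd2[of "a i" "b i"]] by auto
  have gen: "gen_exp a b j i = c i * gen_exp a' b' j i" for j i
    by (cases j) (auto simp: gen_exp_def aeq beq)
  define C1 :: "'n + 'n option \<Rightarrow> nat" where "C1 = case_sum c (\<lambda>_. 1)"
  have C1pos: "\<forall>v. C1 v > 0" using cpos by (auto simp: C1_def split: sum.split)
  have dl: "delta c = mono_map (scale C1)" by (simp add: delta_scale C1_def)
  let ?J = "rees_ideal a b :: ('n + 'n option, 'k) mpoly set"
  let ?J' = "rees_ideal a' b' :: ('n + 'n option, 'k) mpoly set"
  have P1: "?J = ideal_gen (delta c ` ?J')"
    unfolding dl C1_def by (rule part1a[OF cpos gen])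
  have P1': "?J = ext C1 ?J'" using P1 unfolding dl ext_def[OF C1pos] .
  have J'ideal: "is_ideal ?J'" by (simp add: rees_ideal_kerm ker_ideal rees_addhom)
  obtain G0 where G0: "finite G0" "G0 \<subseteq> bins (rees_mono a' b')" "ideal_gen G0 = ?J'"
    using kernel_fin_gen[OF rees_addhom[of a' b'], where 'k = 'k] by (auto simp: rees_ideal_kerm)
  obtain G' where G': "G' \<subseteq> G0" "minimal_gens G' ?J'"
    using minimal_subset[OF G0(1) G0(3)] by blast
  have finG': "finite G'" using G'(1) G0(1) finite_subset by blast
  have binG': "\<forall>g\<in>G'. binomial g"
  proof
    fix g assume "g \<in> G'"
    then have "g \<in> bins (rees_mono a' b')" using G'(1) G0(2) by blast
    then obtain u v where "g = bin u v" unfolding bins_def by blast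
    then show "binomial g" by (simp add: binomial_bin)
  qed
  define G where "G = delta c ` G'"
  have injd: "inj (delta c :: ('n + 'n option, 'k) mpoly \<Rightarrow> _)"
    unfolding dl by (rule mono_map_inj[OF scale_inj[OF C1pos]])
  have keysd: "ks (delta c g) = scale C1 ` ks g" for g :: "('n + 'n option, 'k) mpoly"
    unfolding dl by (rule keys_mono_map_inj[OF scale_inj[OF C1pos]])
  have binG: "\<forall>g\<in>G. binomial g"
  proof
    fix g assume "g \<in> G"
    then obtain h where h: "h \<in> G'" "g = delta c h" unfolding G_def by blast
    have "card (ks g) \<le> card (ks h)" unfolding h(2) keysd by (rule card_image_le[OF finite_keys])
    also have "\<dots> \<le> 2" using binG' h(1) by (simp add: binomial_def)
    finally show "binomial g" by (simp add: binomial_def)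
  qed
  have bij: "bij_betw (delta c) G' G"
    unfolding G_def by (rule inj_on_imp_bij_betw) (use injd in \<open>simp add: inj_on_def inj_def\<close>)
  have tdg: "\<forall>g\<in>G'. tdegs (delta c g) = tdegs g"
  proof
    fix g :: "('n + 'n option, 'k) mpoly" assume "g \<in> G'"
    have "tdegs (delta c g) = (tdeg \<circ> scale C1) ` ks g" unfolding tdegs_def keysd by (simp add: image_comp)
    also have "tdeg \<circ> scale C1 = tdeg" unfolding C1_def by (simp add: fun_eq_iff tdeg_def)
    finally show "tdegs (delta c g) = tdegs g" by (simp add: tdegs_def)
  qed
  have genG: "ideal_gen G = ?J"
  proof -
    have "ideal_gen G = ext C1 G'" unfolding G_def dl ext_def[OF C1pos] ..
    also have "\<dots> = ext C1 (ideal_gen G')" by (rule ext_gen'[OF C1pos, symmetric])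
    also have "ideal_gen G' = ?J'" using G'(2) by (simp add: minimal_gens_def)
    finally show ?thesis using P1' by simp
  qed
  have minG: "minimal_gens G ?J"
    unfolding minimal_gens_def
  proof (intro conjI allI impI)
    show "ideal_gen G = ?J" by (rule genG)
    fix H assume H: "H \<subset> G"
    define H' where "H' = {g\<in>G'. delta c g \<in> H}"
    have HH: "H = delta c ` H'" using H unfolding H'_def G_def by blast
    have "H' \<subset> G'"
    proof -
      have "H' \<subseteq> G'" unfolding H'_def by blast
      moreover have "H' \<noteq> G'" using H HH G_def by blast
      ultimately show ?thesis by blast
    qed
    then have ne: "ideal_gen H' \<noteq> ?J'" using G'(2) by (simp add: minimal_gens_def)
    show "ideal_gen H \<noteq> ?J"
    proof
      assume eqH: "ideal_gen H = ?J"
      have "ext C1 (ideal_gen H') = ext C1 H'" by (rule ext_gen'[OF C1pos])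
      also have "\<dots> = ideal_gen H" unfolding HH dl ext_def[OF C1pos] ..
      also have "\<dots> = ext C1 ?J'" using eqH P1' by simp
      finally have "ideal_gen H' = ?J'" by (rule ext_inj[OF C1pos is_ideal_gen J'ideal])
      with ne show False by blast
    qed
  qed
  have part1b: "\<exists>G G' \<sigma>. finite G' \<and> minimal_gens G' ?J'
            \<and> minimal_gens G ?J \<and> (\<forall>g\<in>G. binomial g) \<and> (\<forall>g\<in>G'. binomial g)
            \<and> bij_betw \<sigma> G' G \<and> (\<forall>g\<in>G'. tdegs (\<sigma> g) = tdegs g)"
    using finG' G'(2) minG binG binG' bij tdg by blast
  let ?I = "mon_ideal a b :: ('n,'k) mpoly set"
  let ?I' = "mon_ideal a' b' :: ('n,'k) mpoly set"
  let ?P = "pure_ideal a :: ('n,'k) mpoly set"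
  let ?P' = "pure_ideal a' :: ('n,'k) mpoly set"
  have gens: "mono_map (scale c) ` ((\<lambda>i. xmon (\<lambda>j. if j = i then a' i else 0)) ` UNIV)
      = ((\<lambda>i. xmon (\<lambda>j. if j = i then a i else 0) :: ('n,'k) mpoly) ` UNIV)"
  proof -
    have "(\<lambda>j. c j * (if j = i then a' i else 0)) = (\<lambda>j. if j = i then a i else 0)" for i
      by (auto simp: aeq)
    then show ?thesis by (simp add: image_image xmon_scale)
  qed
  have gb: "mono_map (scale c) (xmon b' :: ('n,'k) mpoly) = xmon b"
  proof -
    have "(\<lambda>i. c i * b' i) = b" by (auto simp: beq)
    then show ?thesis by (simp add: xmon_scale)
  qed
  have extP: "ext c ?P' = ?P"
  proof -
    have "ext c ?P' = ext c ((\<lambda>i. xmon (\<lambda>j. if j = i then a' i else 0)) ` UNIV)"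
      unfolding pure_ideal_def by (rule ext_gen'[OF cpos])
    also have "\<dots> = ?P" unfolding ext_def[OF cpos] gens pure_ideal_def ..
    finally show ?thesis .
  qed
  have extI: "ext c ?I' = ?I"
  proof -
    have "ext c ?I' = ext c ((\<lambda>i. xmon (\<lambda>j. if j = i then a' i else 0)) ` UNIV \<union> {xmon b'})"
      unfolding mon_ideal_def by (rule ext_gen'[OF cpos])
    also have "\<dots> = ?I" unfolding ext_def[OF cpos] image_Un gens mon_ideal_def by (simp add: gb)
    finally show ?thesis .
  qed
  have equiv: "ideal_mult ?P (ideal_pow ?I r) = ideal_pow ?I (Suc r) \<longleftrightarrow>
               ideal_mult ?P' (ideal_pow ?I' r) = ideal_pow ?I' (Suc r)" for r
  proof -
    have L: "ext c (ideal_mult ?P' (ideal_pow ?I' r)) = ideal_mult ?P (ideal_pow ?I r)"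
      by (simp add: ext_mult[OF cpos] ext_pow[OF cpos] extP extI)
    have R: "ext c (ideal_pow ?I' (Suc r)) = ideal_pow ?I (Suc r)"
      by (simp only: ext_pow[OF cpos] extI)
    show ?thesis
    proof
      assume "ideal_mult ?P (ideal_pow ?I r) = ideal_pow ?I (Suc r)"
      then have "ext c (ideal_mult ?P' (ideal_pow ?I' r)) = ext c (ideal_pow ?I' (Suc r))" using L R by simp
      then show "ideal_mult ?P' (ideal_pow ?I' r) = ideal_pow ?I' (Suc r)"
        by (rule ext_inj[OF cpos is_ideal_mult is_ideal_pow])
    next
      assume "ideal_mult ?P' (ideal_pow ?I' r) = ideal_pow ?I' (Suc r)"
      then show "ideal_mult ?P (ideal_pow ?I r) = ideal_pow ?I (Suc r)" using L R by simp
    qed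
  qed
  have part2: "is_reduction ?P' ?I' \<longrightarrow> is_reduction ?P ?I \<and> red_num ?P ?I = red_num ?P' ?I'"
  proof
    assume red: "is_reduction ?P' ?I'"
    have "?P \<subseteq> ?I" using red ext_mono[OF cpos, of ?P' ?I'] unfolding is_reduction_def extP extI by blast
    moreover have "\<exists>r. ideal_mult ?P (ideal_pow ?I r) = ideal_pow ?I (Suc r)"
      using red equiv unfolding is_reduction_def by blast
    ultimately have "is_reduction ?P ?I" unfolding is_reduction_def by blast
    moreover have "red_num ?P ?I = red_num ?P' ?I'" unfolding red_num_def equiv ..
    ultimately show "is_reduction ?P ?I \<and> red_num ?P ?I = red_num ?P' ?I'" by blast
  qed
  show ?thesis using P1 part1b part2 by blast
qed

end
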